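(* Let $n \ge r \ge r^* \ge 1$ be integers, let $A_1,\dots,A_m \in \mathbb{R}^{n\times n}$ be symmetric matrices, and define the linear map $\mathcal{A}:\mathbb{R}^{n\times n}\to\mathbb{R}^m$ by $\mathcal{A}(M) = (\langle A_1,M\rangle,\dots,\langle A_m,M\rangle)^\top$, where $\langle A,B\rangle=\operatorname{tr}(A^\top B)$. Let $M^*\in\mathbb{R}^{n\times n}$ be a nonzero symmetric positive semidefinite matrix of rank $r^*$, let $b=\mathcal{A}(M^* )$, and consider \[ f(X) = \tfrac12\|\mathcal{A}(XX^\top)-b\|_2^2,\qquad X\in\mathbb{R}^{n\times r}. \] Assume $\mathcal{A}$ satisfies the RIP$_{r+r^*}$ property with constant $\delta\in[0,1)$. Let $\hat X\in\mathbb{R}^{n\times r}$ be a first-order critical point of $f$, i.e. $\nabla f(\hat X)=0$. If \[ \|\hat X\hat X^\top - M^*\|_F^2 > 2\,\frac{1+\delta}{1-\delta}\,\operatorname{tr}(M^* )\,\sigma_r(\hat X)^2, \] then $\hat X$ is not a second-order critical point of $f$; it is a strict saddle point, and the Hessian $\nabla^2 f(\hat X)$ has a strictly negative eigenvalue not larger than \[ 2(1+\delta)\sigma_r(\hat X)^2 - \frac{(1-\delta)\,\|\hat X\hat X^\top - M^*\|_F^2}{\operatorname{tr}(M^* )}. \]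
   Context: RIP: for a natural number $p$, $\mathcal{A}$ satisfies $\delta_p$-RIP (RIP$_p$ with constant $\delta$) if $(1-\delta)\|M\|_F^2 \le \|\mathcal{A}(M)\|_2^2 \le (1+\delta)\|M\|_F^2$ for all $M\in\mathbb{R}^{n\times n}$ with $\operatorname{rank}(M)\le p$. $\sigma_r(\hat X)$ denotes the $r$-th largest singular value of $\hat X$. The Hessian $\nabla^2 f(X)$ is regarded as the symmetric quadratic form $U\mapsto \nabla^2 f(X)[U,U]=\sum \frac{\partial^2 f}{\partial X_{ij}\partial X_{kl}}(X)U_{ij}U_{kl}$ on $\mathbb{R}^{n\times r}$ (with the Frobenius inner product), and its eigenvalues are those of this form. A second-order critical point is a point with zero gradient and positive semidefinite Hessian; a strict saddle is a first-order critical point whose Hessian has a strictly negative eigenvalue. *)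

theory Defs
  imports "HOL-Analysis.Analysis"
begin

text \<open>Matrices are HOL-Analysis matrices: an n x r matrix is real^'r^'n
  (rows indexed by 'n, columns by 'r); dimensions are CARD of the index types.\<close>

definition frob_inner :: "real^'c^'b \<Rightarrow> real^'c^'b \<Rightarrow> real" where
  "frob_inner A B = trace (transpose A ** B)"

definition frob_norm :: "real^'c^'b \<Rightarrow> real" where
  "frob_norm M = sqrt (\<Sum>i\<in>UNIV. \<Sum>j\<in>UNIV. (M $ i $ j)\<^sup>2)"

definition meas :: "('m \<Rightarrow> real^'n^'n) \<Rightarrow> real^'n^'n \<Rightarrow> real^'m" where
  "meas A M = (\<chi> k. frob_inner (A k) M)"

definition RIP :: "('m::finite \<Rightarrow> real^'n^'n) \<Rightarrow> nat \<Rightarrow> real \<Rightarrow> bool" where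
  "RIP A p \<delta> \<longleftrightarrow> (\<forall>M::real^'n^'n. rank M \<le> p \<longrightarrow>
      (1 - \<delta>) * (frob_norm M)\<^sup>2 \<le> (norm (meas A M))\<^sup>2 \<and>
      (norm (meas A M))\<^sup>2 \<le> (1 + \<delta>) * (frob_norm M)\<^sup>2)"

definition psd :: "real^'n^'n \<Rightarrow> bool" where
  "psd M \<longleftrightarrow> transpose M = M \<and> (\<forall>x. 0 \<le> x \<bullet> (M *v x))"

definition mat_eigenvalue :: "real^'n^'n \<Rightarrow> real \<Rightarrow> bool" where
  "mat_eigenvalue M l \<longleftrightarrow> (\<exists>v. v \<noteq> 0 \<and> M *v v = l *\<^sub>R v)"

text \<open>The r-th largest singular value of an n x r matrix X (r = number of columns):
  the singular values of X are the square roots of the eigenvalues of X^T X,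
  and since X has exactly r of them the r-th largest is the smallest.\<close>
definition sigma_r :: "real^'r^'n \<Rightarrow> real" where
  "sigma_r X = sqrt (Min {l. mat_eigenvalue (transpose X ** X) l})"

definition emat :: "'n \<Rightarrow> 'r \<Rightarrow> real^'r^'n" where
  "emat i j = (\<chi> a b. if a = i \<and> b = j then 1 else 0)"

definition grad :: "(real^'r^'n \<Rightarrow> real) \<Rightarrow> real^'r^'n \<Rightarrow> real^'r^'n" where
  "grad f X = (\<chi> i j. deriv (\<lambda>t. f (X + t *\<^sub>R emat i j)) 0)"

definition d2 :: "(real^'r^'n \<Rightarrow> real) \<Rightarrow> real^'r^'n \<Rightarrow> 'n \<Rightarrow> 'r \<Rightarrow> 'n \<Rightarrow> 'r \<Rightarrow> real" where
  "d2 f X i j k l = deriv (\<lambda>s. deriv (\<lambda>t. f (X + t *\<^sub>R emat k l + s *\<^sub>R emat i j)) 0) 0"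

definition hess_form :: "(real^'r^'n \<Rightarrow> real) \<Rightarrow> real^'r^'n \<Rightarrow> real^'r^'n \<Rightarrow> real" where
  "hess_form f X U = (\<Sum>i\<in>UNIV. \<Sum>j\<in>UNIV. \<Sum>k\<in>UNIV. \<Sum>l\<in>UNIV.
       d2 f X i j k l * U $ i $ j * U $ k $ l)"

definition hess_op :: "(real^'r^'n \<Rightarrow> real) \<Rightarrow> real^'r^'n \<Rightarrow> real^'r^'n \<Rightarrow> real^'r^'n" where
  "hess_op f X U = (\<chi> i j. \<Sum>k\<in>UNIV. \<Sum>l\<in>UNIV. d2 f X i j k l * U $ k $ l)"

definition hess_eigenvalue :: "(real^'r^'n \<Rightarrow> real) \<Rightarrow> real^'r^'n \<Rightarrow> real \<Rightarrow> bool" where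
  "hess_eigenvalue f X l \<longleftrightarrow> (\<exists>U. U \<noteq> 0 \<and> hess_op f X U = l *\<^sub>R U)"

definition first_order_critical :: "(real^'r^'n \<Rightarrow> real) \<Rightarrow> real^'r^'n \<Rightarrow> bool" where
  "first_order_critical f X \<longleftrightarrow> grad f X = 0"

definition second_order_critical :: "(real^'r^'n \<Rightarrow> real) \<Rightarrow> real^'r^'n \<Rightarrow> bool" where
  "second_order_critical f X \<longleftrightarrow> grad f X = 0 \<and> (\<forall>U. 0 \<le> hess_form f X U)"

definition strict_saddle :: "(real^'r^'n \<Rightarrow> real) \<Rightarrow> real^'r^'n \<Rightarrow> bool" where
  "strict_saddle f X \<longleftrightarrow> first_order_critical f X \<and> (\<exists>l. hess_eigenvalue f X l \<and> l < 0)"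

end

theory Submission
  imports Defs "HOL-Analysis.Analysis"
begin

lemma frob_inner_eq: "frob_inner A B = A \<bullet> B"
  unfolding frob_inner_def trace_def matrix_matrix_mult_def transpose_def inner_vec_def
  apply simp
  apply (subst sum.swap) 
  apply (simp add: mult.commute)
  done
lemma frob_norm_eq: "frob_norm M = norm M"
  unfolding frob_norm_def norm_vec_def L2_set_def
  by (intro arg_cong[where f=sqrt] sum.cong) (simp_all add: real_norm_def sum_nonneg)

lemma meas_eq: "meas A M = (\<chi> k. A k \<bullet> M)"
  by (simp add: meas_def frob_inner_eq)

lemma meas_add: "meas A (M + N) = meas A M + meas A N"
  by (simp add: meas_eq vec_eq_iff inner_add_right)
lemma meas_diff: "meas A (M - N) = meas A M - meas A N"
  by (simp add: meas_eq vec_eq_iff inner_diff_right)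
lemma meas_scale: "meas A (c *\<^sub>R M) = c *\<^sub>R meas A M"
  by (simp add: meas_eq vec_eq_iff)
lemma meas_zero: "meas A 0 = 0"
  by (simp add: meas_eq vec_eq_iff)
lemma meas_sum: "meas A (sum g S) = sum (\<lambda>x. meas A (g x)) S"
  by (simp add: meas_eq vec_eq_iff inner_sum_right)
lemma linear_meas: "linear (meas A)"
  by (rule linearI) (simp_all add: meas_add meas_scale)

lemma transpose_add: "transpose (M + N) = transpose M + transpose N"
  by (simp add: transpose_def vec_eq_iff)
lemma transpose_scale: "transpose (c *\<^sub>R M) = c *\<^sub>R transpose (M::real^'a^'b)"
  by (simp add: transpose_def vec_eq_iff)
lemma matrix_add_rdistrib': "((B + C) ** A) = (B ** A) + (C ** A)"
  by (vector matrix_matrix_mult_def sum.distrib[symmetric] field_simps)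
lemma mm_scale_left: "(c *\<^sub>R B) ** (A::real^'a^'b) = c *\<^sub>R (B ** A)"
  by (simp add: scalar_matrix_assoc)
lemma mm_scale_right: "(B::real^'a^'b) ** (c *\<^sub>R A) = c *\<^sub>R (B ** A)"
  by (simp add: matrix_matrix_mult_def sum_distrib_left mult_ac vec_eq_iff)

definition outer :: "real^'a \<Rightarrow> real^'b \<Rightarrow> real^'b^'a" where
  "outer v w = (\<chi> i j. v$i * w$j)"

lemma norm_outer_sq: "(norm (outer v w))^2 = (norm v * norm w)^2"
  unfolding power2_norm_eq_inner power_mult_distrib
  apply (simp add: outer_def inner_vec_def sum_product)
  apply (intro sum.cong refl)
  apply (simp add: algebra_simps)
  done

lemma norm_outer: "norm (outer v w) = norm v * norm w"
  using norm_outer_sq[of v w] by (simp add: power2_eq_iff_nonneg)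

lemma outer_mv: "outer p w *v x = (w \<bullet> x) *\<^sub>R p"
  by (simp add: outer_def matrix_vector_mult_def inner_vec_def vec_eq_iff sum_distrib_left mult_ac)

lemma quad_nonneg_zero:
  fixes a K :: real
  assumes "a \<ge> 0" and h: "\<And>t. 0 \<le> 2*t*a + t^2*K"
  shows "a = 0"
proof (rule ccontr)
  assume "a \<noteq> 0" then have a: "a > 0" using assms(1) by simp
  define t where "t = - a / (\<bar>K\<bar> + 1)"
  have d: "\<bar>K\<bar> + 1 > 0" by simp
  have tneg: "t < 0" unfolding t_def using a d by (simp add: divide_neg_pos)
  have "0 \<le> t * (2*a + t*K)" using h[of t] by (simp add: power2_eq_square algebra_simps)
  then have le: "2*a + t*K \<le> 0" using tneg by (simp add: zero_le_mult_iff)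
  have "\<bar>t*K\<bar> = a * \<bar>K\<bar> / (\<bar>K\<bar> + 1)" unfolding t_def using a d by (simp add: abs_mult abs_divide)
  also have "\<dots> < a" using a d by (simp add: divide_less_eq)
  finally have "t*K > -a" by linarith
  then show False using le a by linarith
qed

lemma sym_min_eig:
  fixes T :: "'a::euclidean_space \<Rightarrow> 'a"
  assumes lin: "linear T" and sym: "\<And>x y. T x \<bullet> y = x \<bullet> T y"
  shows "\<exists>v \<mu>. norm v = 1 \<and> T v = \<mu> *\<^sub>R v \<and> (\<forall>x. \<mu> * (norm x)^2 \<le> x \<bullet> T x)"
proof -
  have bl: "bounded_linear T" using lin by (simp add: linear_conv_bounded_linear)
  have cont: "continuous_on (sphere 0 1) (\<lambda>x. x \<bullet> T x)"
    by (intro continuous_intros linear_continuous_on bl)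
  obtain b :: 'a where "b \<in> Basis" using nonempty_Basis by blast
  then have ne: "sphere (0::'a) 1 \<noteq> {}" by (auto simp: norm_Basis)
  obtain v where vS: "v \<in> sphere 0 1" and vmin: "\<And>y. y \<in> sphere 0 1 \<Longrightarrow> v \<bullet> T v \<le> y \<bullet> T y"
    using continuous_attains_inf[OF compact_sphere ne cont] by blast
  define \<mu> where "\<mu> = v \<bullet> T v"
  have nv: "norm v = 1" using vS by simp
  have ge: "\<mu> * (norm x)^2 \<le> x \<bullet> T x" for x
  proof (cases "x = 0")
    case True then show ?thesis using linear_0[OF lin] by simp
  next
    case False
    define y where "y = (1 / norm x) *\<^sub>R x"
    have "y \<in> sphere 0 1" using False by (simp add: y_def)
    then have "\<mu> \<le> y \<bullet> T y" using vmin \<mu>_def by blast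
    also have "y \<bullet> T y = (x \<bullet> T x) / (norm x)^2"
      unfolding y_def linear_cmul[OF lin] by (simp add: power2_eq_square)
    finally show ?thesis using False by (simp add: pos_le_divide_eq mult.commute)
  qed
  define w where "w = T v - \<mu> *\<^sub>R v"
  have "0 \<le> 2*t*(w \<bullet> w) + t^2*(w \<bullet> T w - \<mu> * (w \<bullet> w))" for t
  proof -
    define x where "x = v + t *\<^sub>R w"
    have Tx: "T x = T v + t *\<^sub>R T w" unfolding x_def by (simp add: linear_add[OF lin] linear_cmul[OF lin])
    have s1: "v \<bullet> T w = w \<bullet> T v" using sym[of v w] by (simp add: inner_commute)
    have "x \<bullet> T x = v \<bullet> T v + 2*t*(w \<bullet> T v) + t^2 * (w \<bullet> T w)"
      unfolding Tx using s1 unfolding x_def by (simp add: inner_add_left inner_add_right power2_eq_square algebra_simps)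
    moreover have "(norm x)^2 = 1 + 2*t*(v \<bullet> w) + t^2*(w \<bullet> w)"
    proof -
      have vv: "v \<bullet> v = 1" using nv by (metis power2_norm_eq_inner power_one)
      have "(norm x)^2 = x \<bullet> x" by (simp add: power2_norm_eq_inner)
      also have "\<dots> = v \<bullet> v + 2*t*(v \<bullet> w) + t^2*(w \<bullet> w)"
        unfolding x_def by (simp add: inner_add_left inner_add_right power2_eq_square algebra_simps inner_commute)
      finally show ?thesis using vv by simp
    qed
    moreover have "w \<bullet> T v - \<mu> * (v \<bullet> w) = w \<bullet> w"
      unfolding w_def by (simp add: inner_diff_left inner_diff_right inner_commute algebra_simps)
    ultimately show ?thesis using ge[of x] unfolding \<mu>_def[symmetric]
      by (simp add: algebra_simps)
  qed
  then have "w \<bullet> w = 0" by (intro quad_nonneg_zero) auto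
  then have "T v = \<mu> *\<^sub>R v" unfolding w_def by simp
  then show ?thesis using nv ge by blast
qed

definition ff :: "('m::finite \<Rightarrow> real^'n^'n) \<Rightarrow> real^'n^'n \<Rightarrow> real^'r^'n \<Rightarrow> real" where
  "ff A Ms X = (1/2) * (norm (meas A (X ** transpose X) - meas A Ms))^2"

definition Rv :: "('m::finite \<Rightarrow> real^'n^'n) \<Rightarrow> real^'n^'n \<Rightarrow> real^'r^'n \<Rightarrow> real^'m" where
  "Rv A Ms X = meas A (X ** transpose X) - meas A Ms"

definition Lm :: "('m::finite \<Rightarrow> real^'n^'n) \<Rightarrow> real^'r^'n \<Rightarrow> real^'r^'n \<Rightarrow> real^'m" where
  "Lm A X V = meas A (X ** transpose V + V ** transpose X)"

definition Bf :: "('m::finite \<Rightarrow> real^'n^'n) \<Rightarrow> real^'n^'n \<Rightarrow> real^'r^'n \<Rightarrow> real^'r^'n \<Rightarrow> real^'r^'n \<Rightarrow> real" where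
  "Bf A Ms X V W = Lm A X V \<bullet> Lm A X W + Rv A Ms X \<bullet> meas A (V ** transpose W + W ** transpose V)"

lemma prod_line: "((X::real^'r^'n) + t *\<^sub>R V) ** transpose (X + t *\<^sub>R V) =
   X ** transpose X + t *\<^sub>R (X ** transpose V + V ** transpose X) + t^2 *\<^sub>R (V ** transpose V)"
  apply (simp only: transpose_add transpose_scale matrix_add_ldistrib matrix_add_rdistrib' mm_scale_left mm_scale_right)
  apply (simp add: power2_eq_square algebra_simps)
  done

lemma Rv_line: "Rv A Ms (X + t *\<^sub>R V) = Rv A Ms X + t *\<^sub>R Lm A X V + t^2 *\<^sub>R meas A (V ** transpose V)"
  unfolding Rv_def Lm_def prod_line by (simp add: meas_add meas_scale algebra_simps)

lemma Lm_line: "Lm A (X + s *\<^sub>R E) W = Lm A X W + s *\<^sub>R meas A (E ** transpose W + W ** transpose E)"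
  unfolding Lm_def
  apply (simp only: transpose_add transpose_scale matrix_add_ldistrib matrix_add_rdistrib' mm_scale_left mm_scale_right)
  apply (simp add: meas_add meas_scale algebra_simps)
  done

lemma deriv_poly4: "deriv (\<lambda>t::real. a + b*t + c*t^2 + d*t^3 + e*t^4) 0 = b"
proof -
  have "((\<lambda>t::real. a + b*t + c*t^2 + d*t^3 + e*t^4) has_real_derivative b) (at 0)"
    by (auto intro!: derivative_eq_intros)
  then show ?thesis by (rule DERIV_imp_deriv)
qed

lemma ff_line: "ff A Ms (X + t *\<^sub>R V) =
   (1/2)*(R \<bullet> R) + (R \<bullet> P)*t + ((1/2)*(P \<bullet> P) + R \<bullet> Q)*t^2 + (P \<bullet> Q)*t^3 + ((1/2)*(Q \<bullet> Q))*t^4"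
  if "R = Rv A Ms X" "P = Lm A X V" "Q = meas A (V ** transpose V)"
proof -
  have "ff A Ms (X + t *\<^sub>R V) = (1/2) * ((R + t *\<^sub>R P + t^2 *\<^sub>R Q) \<bullet> (R + t *\<^sub>R P + t^2 *\<^sub>R Q))"
    unfolding ff_def Rv_def[symmetric] Rv_line that power2_norm_eq_inner ..
  also have "\<dots> = (1/2)*(R \<bullet> R) + (R \<bullet> P)*t + ((1/2)*(P \<bullet> P) + R \<bullet> Q)*t^2 + (P \<bullet> Q)*t^3 + ((1/2)*(Q \<bullet> Q))*t^4"
    by (simp add: inner_add_left inner_add_right inner_commute power2_eq_square power3_eq_cube
        power4_eq_xxxx algebra_simps)
  finally show ?thesis .
qed

lemma deriv_ff_line: "deriv (\<lambda>t. ff A Ms (X + t *\<^sub>R V)) 0 = Rv A Ms X \<bullet> Lm A X V"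
  unfolding ff_line[OF refl refl refl] by (rule deriv_poly4)

lemma grad_ff: "grad (ff A Ms) X $ i $ j = Rv A Ms X \<bullet> Lm A X (emat i j)"
  unfolding grad_def by (simp add: deriv_ff_line)

lemma deriv_poly3: "deriv (\<lambda>t::real. a + b*t + c*t^2 + d*t^3) 0 = b"
proof -
  have "((\<lambda>t::real. a + b*t + c*t^2 + d*t^3) has_real_derivative b) (at 0)"
    by (auto intro!: derivative_eq_intros)
  then show ?thesis by (rule DERIV_imp_deriv)
qed

lemma d2_ff: "d2 (ff A Ms) X i j k l = Bf A Ms X (emat i j) (emat k l)"
proof -
  define E where "E = emat i j"
  define E' where "E' = emat k l"
  define R where "R = Rv A Ms X"
  define P where "P = Lm A X E"
  define Q where "Q = meas A (E ** transpose E)"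
  define P' where "P' = Lm A X E'"
  define S where "S = meas A (E ** transpose E' + E' ** transpose E)"
  have "deriv (\<lambda>t. ff A Ms (X + t *\<^sub>R E' + s *\<^sub>R E)) 0 =
        (R \<bullet> P') + (R \<bullet> S + P \<bullet> P') * s + (Q \<bullet> P' + P \<bullet> S) * s^2 + (Q \<bullet> S) * s^3" for s
  proof -
    have "(\<lambda>t. ff A Ms (X + t *\<^sub>R E' + s *\<^sub>R E)) = (\<lambda>t. ff A Ms ((X + s *\<^sub>R E) + t *\<^sub>R E'))"
      by (simp add: algebra_simps)
    then have "deriv (\<lambda>t. ff A Ms (X + t *\<^sub>R E' + s *\<^sub>R E)) 0 = Rv A Ms (X + s *\<^sub>R E) \<bullet> Lm A (X + s *\<^sub>R E) E'"
      by (simp add: deriv_ff_line)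
    also have "\<dots> = (R + s *\<^sub>R P + s^2 *\<^sub>R Q) \<bullet> (P' + s *\<^sub>R S)"
      unfolding Rv_line Lm_line R_def P_def Q_def P'_def S_def ..
    also have "\<dots> = (R \<bullet> P') + (R \<bullet> S + P \<bullet> P') * s + (Q \<bullet> P' + P \<bullet> S) * s^2 + (Q \<bullet> S) * s^3"
      by (simp add: inner_add_left inner_add_right power2_eq_square power3_eq_cube algebra_simps)
    finally show ?thesis .
  qed
  then have "d2 (ff A Ms) X i j k l = R \<bullet> S + P \<bullet> P'"
    unfolding d2_def E_def[symmetric] E'_def[symmetric] by (simp add: deriv_poly3)
  then show ?thesis unfolding Bf_def E_def[symmetric] E'_def[symmetric] P_def P'_def R_def S_def
    by simp
qed

lemma Bf_sym: "Bf A Ms X V W = Bf A Ms X W V"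
  unfolding Bf_def by (simp add: inner_commute add.commute)

lemma inner_mat: "(M::real^'r^'n) \<bullet> N = (\<Sum>i\<in>UNIV. \<Sum>j\<in>UNIV. M$i$j * N$i$j)"
  by (simp add: inner_vec_def)

lemma mat_expand: "(V::real^'r^'n) = (\<Sum>i\<in>UNIV. \<Sum>j\<in>UNIV. V$i$j *\<^sub>R emat i j)"
proof -
  have h: "(\<Sum>xa\<in>UNIV. V$x$xa * (if i = x \<and> j = xa then 1 else 0)) = (if i = x then V$x$j else 0)" for i j x
  proof (cases "i = x")
    case True
    have "(\<Sum>xa\<in>UNIV. V$x$xa * (if i = x \<and> j = xa then 1 else 0)) = (\<Sum>xa\<in>UNIV. if j = xa then V$x$xa else 0)"
      using True by (intro sum.cong) auto
    also have "\<dots> = V$x$j" by simp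
    finally show ?thesis using True by simp
  qed auto
  show ?thesis by (simp add: vec_eq_iff emat_def h)
qed

lemma lin_expand:
  fixes g :: "real^'r^'n \<Rightarrow> real"
  assumes "linear g"
  shows "g V = (\<Sum>i\<in>UNIV. \<Sum>j\<in>UNIV. V$i$j * g (emat i j))"
proof -
  have "g V = g (\<Sum>i\<in>UNIV. \<Sum>j\<in>UNIV. V$i$j *\<^sub>R emat i j)" using mat_expand[of V] by simp
  also have "\<dots> = (\<Sum>i\<in>UNIV. \<Sum>j\<in>UNIV. V$i$j * g (emat i j))"
    by (simp add: linear_sum[OF assms] linear_cmul[OF assms])
  finally show ?thesis .
qed

lemma Lm_add: "Lm A X (V + W) = Lm A X V + Lm A X W"
  unfolding Lm_def
  apply (simp only: transpose_add matrix_add_ldistrib matrix_add_rdistrib')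
  apply (simp add: meas_add algebra_simps)
  done

lemma Lm_scale: "Lm A X (c *\<^sub>R V) = c *\<^sub>R Lm A X V"
  unfolding Lm_def
  apply (simp only: transpose_scale mm_scale_left mm_scale_right scaleR_add_right[symmetric])
  apply (simp add: meas_scale)
  done

definition Sm :: "('m::finite \<Rightarrow> real^'n^'n) \<Rightarrow> real^'r^'n \<Rightarrow> real^'r^'n \<Rightarrow> real^'m" where
  "Sm A V W = meas A (V ** transpose W + W ** transpose V)"

lemma Sm_add: "Sm A (V + V') W = Sm A V W + Sm A V' W"
  unfolding Sm_def
  apply (simp only: transpose_add matrix_add_ldistrib matrix_add_rdistrib')
  apply (simp add: meas_add algebra_simps)
  done

lemma Sm_scale: "Sm A (c *\<^sub>R V) W = c *\<^sub>R Sm A V W"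
  unfolding Sm_def
  apply (simp only: transpose_scale mm_scale_left mm_scale_right scaleR_add_right[symmetric])
  apply (simp add: meas_scale)
  done

lemma Bf_Sm: "Bf A Ms X V W = Lm A X V \<bullet> Lm A X W + Rv A Ms X \<bullet> Sm A V W"
  unfolding Bf_def Sm_def ..

lemma Bf_lin1: "linear (\<lambda>V. Bf A Ms X V W)"
  by (rule linearI) (simp_all add: Bf_Sm Lm_add Lm_scale Sm_add Sm_scale inner_add_left inner_add_right algebra_simps)

lemma Bf_lin2: "linear (\<lambda>W. Bf A Ms X V W)"
  using Bf_lin1[of A Ms X V] by (simp add: Bf_sym)

lemma Bf_expand2: "Bf A Ms X V U = (\<Sum>i\<in>UNIV. \<Sum>j\<in>UNIV. U$i$j * Bf A Ms X V (emat i j))"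
  by (rule lin_expand[OF Bf_lin2])

lemma Bf_expand1: "Bf A Ms X V U = (\<Sum>i\<in>UNIV. \<Sum>j\<in>UNIV. V$i$j * Bf A Ms X (emat i j) U)"
  by (rule lin_expand[OF Bf_lin1])

lemma hess_op_ff: "hess_op (ff A Ms) X U = (\<chi> i j. Bf A Ms X (emat i j) U)"
proof -
  have "(\<Sum>k\<in>UNIV. \<Sum>l\<in>UNIV. Bf A Ms X (emat i j) (emat k l) * U$k$l) = Bf A Ms X (emat i j) U" for i j
    by (subst (2) Bf_expand2) (simp add: mult.commute)
  then show ?thesis unfolding hess_op_def d2_ff by simp
qed

lemma hess_op_inner: "V \<bullet> hess_op (ff A Ms) X U = Bf A Ms X V U"
  unfolding hess_op_ff inner_mat by (subst (2) Bf_expand1) simp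

lemma hess_form_ff: "hess_form (ff A Ms) X U = Bf A Ms X U U"
proof -
  have "(\<Sum>k\<in>UNIV. \<Sum>l\<in>UNIV. Bf A Ms X (emat i j) (emat k l) * U$i$j * U$k$l) = U$i$j * Bf A Ms X (emat i j) U" for i j
    by (subst (2) Bf_expand2) (simp add: sum_distrib_left mult_ac)
  then have "hess_form (ff A Ms) X U = (\<Sum>i\<in>UNIV. \<Sum>j\<in>UNIV. U$i$j * Bf A Ms X (emat i j) U)"
    unfolding hess_form_def d2_ff by simp
  also have "\<dots> = Bf A Ms X U U"
    by (subst (2) Bf_expand1) simp
  finally show ?thesis .
qed

lemma hess_op_linear: "linear (hess_op (ff A Ms) X)"
  unfolding hess_op_ff
  by (rule linearI) (simp_all add: vec_eq_iff linear_add[OF Bf_lin2] linear_cmul[OF Bf_lin2])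

lemma hess_op_sym: "hess_op (ff A Ms) X U \<bullet> V = U \<bullet> hess_op (ff A Ms) X V"
  by (simp add: inner_commute[of _ V] hess_op_inner Bf_sym)

lemma sym_inner:
  fixes Q :: "real^'n^'n"
  assumes "transpose Q = Q"
  shows "y \<bullet> (Q *v z) = z \<bullet> (Q *v y)"
proof -
  have "y \<bullet> (Q *v z) = (y v* Q) \<bullet> z" by (simp add: dot_lmul_matrix)
  also have "y v* Q = transpose Q *v y" by simp
  finally show ?thesis using assms by (simp add: inner_commute)
qed

lemma qf_line:
  fixes Q :: "real^'n^'n"
  assumes "transpose Q = Q"
  shows "(y + t *\<^sub>R z) \<bullet> (Q *v (y + t *\<^sub>R z)) = y \<bullet> (Q *v y) + 2*t*(z \<bullet> (Q *v y)) + t^2*(z \<bullet> (Q *v z))"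
  using sym_inner[OF assms, of y z]
  by (simp add: matrix_vector_mult_scaleR matrix_vector_right_distrib inner_add_left inner_add_right
      power2_eq_square algebra_simps)

lemma cs_real:
  fixes p b c :: real
  assumes p: "p \<ge> 0" and c: "c \<ge> 0" and h: "\<And>t. 0 \<le> p + 2*t*b + t^2*c"
  shows "b^2 \<le> p * c"
proof (cases "c > 0")
  case True
  have "0 \<le> p + 2*(-b/c)*b + (-b/c)^2*c" by (rule h)
  also have "\<dots> = p - b^2/c" using True by (simp add: power2_eq_square field_simps)
  finally show ?thesis using True by (simp add: field_simps)
next
  case False
  then have c0: "c = 0" using c by simp
  have "b = 0"
  proof (rule ccontr)
    assume b: "b \<noteq> 0"
    have "0 \<le> p + 2*(-(p+1)/(2*b))*b + (-(p+1)/(2*b))^2*c" by (rule h)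
    also have "\<dots> = -1" using b c0 by (simp add: field_simps)
    finally show False by simp
  qed
  then show ?thesis using p c by simp
qed

lemma psd_cs:
  fixes Q :: "real^'n^'n"
  assumes "psd Q"
  shows "(z \<bullet> (Q *v y))^2 \<le> (y \<bullet> (Q *v y)) * (z \<bullet> (Q *v z))"
proof (rule cs_real)
  show "0 \<le> y \<bullet> (Q *v y)" "0 \<le> z \<bullet> (Q *v z)" using assms by (auto simp: psd_def)
  fix t
  have "0 \<le> (y + t *\<^sub>R z) \<bullet> (Q *v (y + t *\<^sub>R z))" using assms by (auto simp: psd_def)
  then show "0 \<le> y \<bullet> (Q *v y) + 2*t*(z \<bullet> (Q *v y)) + t^2*(z \<bullet> (Q *v z))"
    using qf_line[of Q y t z] assms by (simp add: psd_def)
qed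

lemma axis_inner_mv: "axis a 1 \<bullet> (Q *v x) = (Q *v x) $ a"
  by (simp add: inner_axis')

lemma mv_axis: "((Q::real^'n^'n) *v axis j 1) $ a = Q$a$j"
  by (simp add: matrix_vector_mult_basis column_def)

lemma psd_sym_entry: "psd Q \<Longrightarrow> Q$i$j = Q$j$i"
  unfolding psd_def by (metis transpose_def vec_lambda_beta)

lemma outer_sum_psd_aux:
  fixes S :: "'n::finite set"
  assumes "finite S"
  shows "\<forall>Q::real^'n^'n. psd Q \<and> (\<forall>i j. i \<notin> S \<longrightarrow> Q$i$j = 0) \<longrightarrow> (\<exists>(N::nat) v. Q = (\<Sum>k<N. outer (v k) (v k)))"
  using assms
proof (induction S rule: finite_induct)
  case empty
  show ?case
  proof (intro allI impI)
    fix Q :: "real^'n^'n" assume "psd Q \<and> (\<forall>i j. i \<notin> {} \<longrightarrow> Q$i$j = 0)"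
    then have "Q = 0" by (simp add: vec_eq_iff)
    then show "\<exists>(N::nat) v. Q = (\<Sum>k<N. outer (v k) (v k))" by (intro exI[of _ 0]) simp
  qed
next
  case (insert a S)
  show ?case
  proof (intro allI impI)
    fix Q :: "real^'n^'n" assume H: "psd Q \<and> (\<forall>i j. i \<notin> insert a S \<longrightarrow> Q$i$j = 0)"
    then have psdQ: "psd Q" and zQ: "\<And>i j. i \<notin> insert a S \<Longrightarrow> Q$i$j = 0" by auto
    have symQ: "transpose Q = Q" using psdQ by (simp add: psd_def)
    have cs: "((Q *v y)$a)^2 \<le> (y \<bullet> (Q *v y)) * Q$a$a" for y
      using psd_cs[OF psdQ, of "axis a 1" y] by (simp add: axis_inner_mv mv_axis)
    have Qaa: "Q$a$a \<ge> 0"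
      using psdQ unfolding psd_def by (metis axis_inner_mv mv_axis)
    show "\<exists>(N::nat) v. Q = (\<Sum>k<N. outer (v k) (v k))"
    proof (cases "Q$a$a = 0")
      case True
      have "Q$a$j = 0" for j
        using cs[of "axis j 1"] True by (simp add: mv_axis)
      then have "\<forall>i j. i \<notin> S \<longrightarrow> Q$i$j = 0" using zQ by (metis insertE)
      then show ?thesis using insert.IH psdQ by blast
    next
      case False
      then have pos: "Q$a$a > 0" using Qaa by simp
      define c :: "real^'n" where "c = (1 / sqrt (Q$a$a)) *\<^sub>R (Q$a)"
      define Q' where "Q' = Q - outer c c"
      have cc: "outer c c $ i $ j = Q$a$i * Q$a$j / Q$a$a" for i j
        using pos by (simp add: c_def outer_def real_sqrt_mult[symmetric] field_simps)
      have symQ': "transpose Q' = Q'"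
        unfolding Q'_def using symQ by (simp add: transpose_def outer_def vec_eq_iff mult.commute)
      have "0 \<le> x \<bullet> (Q' *v x)" for x
      proof -
        have "x \<bullet> (Q' *v x) = x \<bullet> (Q *v x) - (c \<bullet> x)^2"
          unfolding Q'_def by (simp add: matrix_vector_mult_diff_rdistrib outer_mv inner_diff_right
              power2_eq_square inner_commute)
        moreover have "(c \<bullet> x)^2 = ((Q *v x)$a)^2 / Q$a$a"
          using pos by (simp add: c_def matrix_vector_mul_component power_divide)
        moreover have "((Q *v x)$a)^2 / Q$a$a \<le> x \<bullet> (Q *v x)"
          using cs[of x] pos by (simp add: divide_le_eq)
        ultimately show ?thesis by simp
      qed
      then have psdQ': "psd Q'" using symQ' by (simp add: psd_def)
      have zQ': "\<forall>i j. i \<notin> S \<longrightarrow> Q'$i$j = 0"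
      proof (intro allI impI)
        fix i j assume iS: "i \<notin> S"
        show "Q'$i$j = 0"
        proof (cases "i = a")
          case True then show ?thesis using pos by (simp add: Q'_def cc)
        next
          case False
          then have "Q$i$j = 0" "Q$a$i = 0" using zQ iS psd_sym_entry[OF psdQ, of a i] by auto
          then show ?thesis by (simp add: Q'_def cc)
        qed
      qed
      obtain N :: nat and v where Nv: "Q' = (\<Sum>k<N. outer (v k) (v k))" using insert.IH psdQ' zQ' by blast
      define v' where "v' = v(N := c)"
      have "(\<Sum>k<Suc N. outer (v' k) (v' k)) = (\<Sum>k<N. outer (v k) (v k)) + outer c c"
        by (simp add: v'_def)
      also have "\<dots> = Q" using Nv unfolding Q'_def by (metis diff_add_cancel)
      finally show ?thesis by metis
    qed
  qed
qed

lemma psd_outer_sum: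
  fixes Q :: "real^'n::finite^'n"
  assumes "psd Q"
  shows "\<exists>(N::nat) v. Q = (\<Sum>k<N. outer (v k) (v k))"
  using outer_sum_psd_aux[of "UNIV::'n set"] assms by simp

lemma inner_transpose_mv: "x \<bullet> (transpose A *v y) = ((A::real^'a^'b) *v x) \<bullet> y"
proof -
  have "x \<bullet> (transpose A *v y) = (y v* A) \<bullet> x" by (simp add: inner_commute)
  also have "\<dots> = y \<bullet> (A *v x)" by (rule dot_lmul_matrix)
  finally show ?thesis by (simp add: inner_commute)
qed

lemma eig_finite:
  fixes M :: "real^'n^'n"
  assumes symM: "transpose M = M"
  shows "finite {l. mat_eigenvalue M l}"
proof -
  define L where "L = {l. mat_eigenvalue M l}"
  define ev where "ev l = (SOME v. v \<noteq> 0 \<and> M *v v = l *\<^sub>R v)" for l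
  have evp: "ev l \<noteq> 0 \<and> M *v ev l = l *\<^sub>R ev l" if "l \<in> L" for l
  proof -
    have "\<exists>v. v \<noteq> 0 \<and> M *v v = l *\<^sub>R v" using that unfolding L_def mat_eigenvalue_def by simp
    then show ?thesis unfolding ev_def by (rule someI_ex)
  qed
  have inj: "inj_on ev L"
  proof (rule inj_onI)
    fix l1 l2 assume "l1 \<in> L" "l2 \<in> L" "ev l1 = ev l2"
    then have "l1 *\<^sub>R ev l1 = l2 *\<^sub>R ev l1" "ev l1 \<noteq> 0" using evp by metis+
    then show "l1 = l2" by simp
  qed
  have orth: "pairwise orthogonal (ev ` L)"
  proof (clarsimp simp: pairwise_def orthogonal_def)
    fix l1 l2 assume l: "l1 \<in> L" "l2 \<in> L" "ev l1 \<noteq> ev l2"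
    then have ne: "l1 \<noteq> l2" by auto
    have "l1 * (ev l1 \<bullet> ev l2) = (M *v ev l1) \<bullet> ev l2" using evp[OF l(1)] by simp
    also have "\<dots> = ev l1 \<bullet> (M *v ev l2)" using sym_inner[OF symM, of "ev l2" "ev l1"] by (simp add: inner_commute)
    also have "\<dots> = l2 * (ev l1 \<bullet> ev l2)" using evp[OF l(2)] by simp
    finally show "ev l1 \<bullet> ev l2 = 0" using ne by simp
  qed
  have "0 \<notin> ev ` L" using evp by auto
  then have "independent (ev ` L)" using orth by (rule pairwise_orthogonal_independent[rotated])
  then have "finite (ev ` L)" by (rule finiteI_independent)
  then show ?thesis using inj finite_imageD unfolding L_def by blast
qed

lemma sigma_vec:
  fixes X :: "real^'r::finite^'n::finite"
  shows "\<exists>q. norm q = 1 \<and> (norm (X *v q))^2 = (sigma_r X)^2"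
proof -
  define M where "M = transpose X ** X"
  have symM: "transpose M = M" unfolding M_def by (simp add: matrix_transpose_mul)
  define L where "L = {l. mat_eigenvalue M l}"
  have lin: "linear ((*v) M)" by (rule matrix_vector_mul_linear)
  obtain v \<mu> where "norm v = 1" "M *v v = \<mu> *\<^sub>R v"
    using sym_min_eig[OF lin] sym_inner[OF symM] by (metis inner_commute)
  then have "\<mu> \<in> L" unfolding L_def mat_eigenvalue_def by (intro CollectI exI[of _ v]) auto
  then have ne: "L \<noteq> {}" by auto
  have fin: "finite L" unfolding L_def by (rule eig_finite[OF symM])
  define l0 where "l0 = Min L"
  have "l0 \<in> L" unfolding l0_def using fin ne by (rule Min_in)
  then obtain q0 where q0: "q0 \<noteq> 0" "M *v q0 = l0 *\<^sub>R q0" unfolding L_def mat_eigenvalue_def by auto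
  define q where "q = (1 / norm q0) *\<^sub>R q0"
  have nq: "norm q = 1" using q0 by (simp add: q_def)
  have Mq: "M *v q = l0 *\<^sub>R q" using q0 by (simp add: q_def matrix_vector_mult_scaleR)
  have "(norm (X *v q))^2 = (X *v q) \<bullet> (X *v q)" by (simp add: power2_norm_eq_inner)
  also have "\<dots> = q \<bullet> (transpose X *v (X *v q))" by (rule inner_transpose_mv[symmetric])
  also have "\<dots> = q \<bullet> (M *v q)" by (simp only: M_def matrix_vector_mul_assoc)
  also have "\<dots> = l0" using Mq nq by (simp add: power2_norm_eq_inner[symmetric])
  finally have e: "(norm (X *v q))^2 = l0" .
  then have "l0 \<ge> 0" by (metis zero_le_power2)
  then have "(sigma_r X)^2 = l0" unfolding sigma_r_def M_def[symmetric] L_def[symmetric] l0_def[symmetric] by simp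
  then show ?thesis using nq e by auto
qed

lemma rank_E_bound:
  fixes X :: "real^'r::finite^'n::finite" and Ms :: "real^'n^'n"
  shows "rank (X ** transpose X - Ms) \<le> CARD('r) + rank Ms"
proof -
  obtain B where B: "B \<subseteq> range ((*v) Ms)" "independent B" "range ((*v) Ms) \<subseteq> span B" "card B = dim (range ((*v) Ms))"
    using basis_exists by blast
  have fB: "finite B" using B(2) by (rule finiteI_independent)
  have cB: "card B = rank Ms" using B(4) by (simp add: rank_dim_range)
  define C where "C = columns X"
  have C_eq: "C = (\<lambda>i. column i X) ` UNIV" unfolding C_def columns_def by auto
  have fC: "finite C" unfolding C_eq by simp
  have cC: "card C \<le> CARD('r)" unfolding C_eq by (rule card_image_le) simp
  have sub: "range ((*v) (X ** transpose X - Ms)) \<subseteq> span (C \<union> B)"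
  proof clarsimp
    fix x
    have e: "(X ** transpose X - Ms) *v x = X *v (transpose X *v x) - Ms *v x"
      by (simp only: matrix_vector_mult_diff_rdistrib matrix_vector_mul_assoc)
    have "X *v (transpose X *v x) \<in> span C" unfolding C_def by (rule matrix_vector_mult_in_columnspace)
    then have 1: "X *v (transpose X *v x) \<in> span (C \<union> B)" by (meson span_mono sup_ge1 subsetD)
    have "Ms *v x \<in> span B" using B(3) by auto
    then have 2: "Ms *v x \<in> span (C \<union> B)" by (meson span_mono sup_ge2 subsetD)
    show "(X ** transpose X - Ms) *v x \<in> span (C \<union> B)" unfolding e using 1 2 by (rule span_diff)
  qed
  have "rank (X ** transpose X - Ms) \<le> card (C \<union> B)"
    unfolding rank_dim_range using sub fC fB by (intro dim_le_card) auto
  also have "\<dots> \<le> card C + card B" by (rule card_Un_le)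
  finally show ?thesis using cC cB by linarith
qed

lemma rank_sym_outer:
  fixes p w :: "real^'n::finite"
  shows "rank (outer p w + outer w p) \<le> 2"
proof -
  have sub: "range ((*v) (outer p w + outer w p)) \<subseteq> span {p, w}"
  proof clarsimp
    fix x
    have "(outer p w + outer w p) *v x = (w \<bullet> x) *\<^sub>R p + (p \<bullet> x) *\<^sub>R w"
      by (simp add: matrix_vector_mult_add_rdistrib outer_mv)
    then show "(outer p w + outer w p) *v x \<in> span {p, w}"
      by (simp add: span_add span_mul span_base)
  qed
  have "rank (outer p w + outer w p) \<le> card {p, w}"
    unfolding rank_dim_range using sub by (intro dim_le_card) auto
  also have "\<dots> \<le> 2" by (simp add: card_insert_le_m1)
  finally show ?thesis .
qed

lemma trace_sum: "trace (\<Sum>k\<in>S. (M k :: real^'n^'n)) = (\<Sum>k\<in>S. trace (M k))"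
  unfolding trace_def by (simp add: sum.swap[of _ S])

lemma trace_outer: "trace (outer v v) = v \<bullet> v"
  by (simp add: trace_def outer_def inner_vec_def)

lemma XUt: "(X::real^'r^'n) ** transpose (outer w q) = outer (X *v q) w"
  by (simp add: matrix_matrix_mult_def transpose_def outer_def matrix_vector_mult_def vec_eq_iff
      sum_distrib_left mult_ac)

lemma UXt: "outer w q ** transpose (X::real^'r^'n) = outer w (X *v q)"
  by (simp add: matrix_matrix_mult_def transpose_def outer_def matrix_vector_mult_def vec_eq_iff
      sum_distrib_left mult_ac)

lemma UUt: "outer w q ** transpose (outer w q) = (q \<bullet> q) *\<^sub>R outer (w::real^'n) w"
  by (simp add: matrix_matrix_mult_def transpose_def outer_def inner_vec_def vec_eq_iff
      sum_distrib_left mult_ac)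

lemma Lm_lin: "linear (Lm A X)"
  by (rule linearI) (simp_all add: Lm_add Lm_scale)

theorem theorem1:
  fixes A :: "'m::finite \<Rightarrow> real^'n::finite^'n"
    and Mstar :: "real^'n^'n"
    and Xh :: "real^'r::finite^'n"
    and rs :: nat and \<delta> :: real
    and f :: "real^'r^'n \<Rightarrow> real"
  assumes dims: "CARD('r) \<le> CARD('n)" "rs \<le> CARD('r)" "1 \<le> rs"
    and symA: "\<And>k. transpose (A k) = A k"
    and Mpsd: "psd Mstar" and Mnz: "Mstar \<noteq> 0" and Mrank: "rank Mstar = rs"
    and f_def: "\<And>X. f X = (1/2) * (norm (meas A (X ** transpose X) - meas A Mstar))\<^sup>2"
    and delta: "0 \<le> \<delta>" "\<delta> < 1"
    and rip: "RIP A (CARD('r) + rs) \<delta>"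
    and crit: "first_order_critical f Xh"
    and gap: "(frob_norm (Xh ** transpose Xh - Mstar))\<^sup>2
              > 2 * ((1 + \<delta>) / (1 - \<delta>)) * trace Mstar * (sigma_r Xh)\<^sup>2"
  shows "\<not> second_order_critical f Xh \<and> strict_saddle f Xh \<and>
         (\<exists>l. hess_eigenvalue f Xh l \<and> l < 0 \<and>
              l \<le> 2 * (1 + \<delta>) * (sigma_r Xh)\<^sup>2
                   - (1 - \<delta>) * (frob_norm (Xh ** transpose Xh - Mstar))\<^sup>2 / trace Mstar)"
proof -
  have fff: "f = ff A Mstar" by (rule ext) (simp add: f_def ff_def)
  define X where "X = Xh"
  define E where "E = X ** transpose X - Mstar"
  define R where "R = Rv A Mstar X"
  define fn where "fn = norm E"
  define \<sigma> where "\<sigma> = sigma_r X"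
  have RE: "R = meas A E" unfolding R_def Rv_def E_def by (simp add: meas_diff)
  have fnE: "frob_norm (Xh ** transpose Xh - Mstar) = fn" unfolding fn_def E_def X_def by (simp add: frob_norm_eq)
  have g0: "R \<bullet> Lm A X (emat i j) = 0" for i j
    using crit unfolding first_order_critical_def fff X_def[symmetric]
    by (metis grad_ff R_def zero_index)
  have linRL: "linear (\<lambda>V. R \<bullet> Lm A X V)"
    by (rule linearI) (simp_all add: Lm_add Lm_scale inner_add_right)
  have "R \<bullet> Lm A X X = 0"
    by (subst lin_expand[OF linRL]) (simp add: g0)
  then have RXX: "R \<bullet> meas A (X ** transpose X) = 0"
    unfolding Lm_def meas_add inner_add_right by linarith
  have RM: "R \<bullet> meas A Mstar = - (R \<bullet> R)"
  proof -
    have "meas A Mstar = meas A (X ** transpose X) - R" unfolding R_def Rv_def by simp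
    then show ?thesis using RXX by (simp add: inner_diff_right)
  qed
  have rkE: "rank E \<le> CARD('r) + rs" unfolding E_def using rank_E_bound[of X Mstar] Mrank by simp
  have RR: "(1 - \<delta>) * fn^2 \<le> R \<bullet> R"
    using rip rkE unfolding RIP_def RE fn_def by (simp add: frob_norm_eq power2_norm_eq_inner)
  obtain N :: nat and v where Nv: "Mstar = (\<Sum>k<N. outer (v k) (v k))" using psd_outer_sum[OF Mpsd] by blast
  have trM: "trace Mstar = (\<Sum>k<N. v k \<bullet> v k)" unfolding Nv trace_sum trace_outer ..
  have measM: "meas A Mstar = (\<Sum>k<N. meas A (outer (v k) (v k)))" unfolding Nv meas_sum ..
  obtain k0 where k0: "k0 < N" "v k0 \<noteq> 0"
  proof -
    have "\<exists>k<N. v k \<noteq> 0"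
    proof (rule ccontr)
      assume "\<not> (\<exists>k<N. v k \<noteq> 0)"
      then have "Mstar = 0" unfolding Nv by (simp add: outer_def vec_eq_iff)
      then show False using Mnz by simp
    qed
    then show ?thesis using that by blast
  qed
  have trpos: "trace Mstar > 0"
    unfolding trM by (rule sum_pos2[of _ k0]) (use k0 in auto)
  have sig0: "\<sigma>^2 \<ge> 0" by simp
  have d1: "1 - \<delta> > 0" using delta by simp
  have fnpos: "fn^2 > 0"
  proof -
    have "0 \<le> 2 * ((1 + \<delta>) / (1 - \<delta>)) * trace Mstar * \<sigma>^2"
      using delta trpos d1 by (intro mult_nonneg_nonneg) auto
    then show ?thesis using gap unfolding fnE \<sigma>_def X_def by linarith
  qed
  define \<kappa> where "\<kappa> = (1 - \<delta>) * fn^2 / trace Mstar"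
  have kappa_gt: "\<kappa> > 2 * (1 + \<delta>) * \<sigma>^2"
  proof -
    have "(1 - \<delta>) * (2 * ((1 + \<delta>) / (1 - \<delta>)) * trace Mstar * \<sigma>^2) < (1 - \<delta>) * fn^2"
      using gap d1 unfolding fnE \<sigma>_def X_def by (intro mult_strict_left_mono) auto
    moreover have "(1 - \<delta>) * (2 * ((1 + \<delta>) / (1 - \<delta>)) * trace Mstar * \<sigma>^2) = 2 * (1 + \<delta>) * trace Mstar * \<sigma>^2"
      using d1 by (simp add: field_simps)
    ultimately have "2 * (1 + \<delta>) * trace Mstar * \<sigma>^2 < (1 - \<delta>) * fn^2" by linarith
    then show ?thesis unfolding \<kappa>_def using trpos by (simp add: field_simps)
  qed
  obtain w where w: "w \<noteq> 0" "R \<bullet> meas A (outer w w) \<le> - \<kappa> * (w \<bullet> w)"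
  proof -
    have "\<exists>k<N. v k \<noteq> 0 \<and> R \<bullet> meas A (outer (v k) (v k)) \<le> - \<kappa> * (v k \<bullet> v k)"
    proof (rule ccontr)
      assume H: "\<not> ?thesis"
      have "0 < (\<Sum>k<N. R \<bullet> meas A (outer (v k) (v k)) + \<kappa> * (v k \<bullet> v k))"
      proof (rule sum_pos2[of _ k0])
        show "0 < R \<bullet> meas A (outer (v k0) (v k0)) + \<kappa> * (v k0 \<bullet> v k0)" using H k0 by force
        fix k assume "k \<in> {..<N}"
        show "0 \<le> R \<bullet> meas A (outer (v k) (v k)) + \<kappa> * (v k \<bullet> v k)"
        proof (cases "v k = 0")
          case True then show ?thesis 
          proof -
            have "outer (v k) (v k) = 0" using True by (simp add: outer_def vec_eq_iff)
            then show ?thesis using True by (simp add: meas_zero)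
          qed
        next
          case False then show ?thesis using H \<open>k \<in> {..<N}\<close> by force
        qed
      qed (use k0 in auto)
      also have "\<dots> = R \<bullet> meas A Mstar + \<kappa> * trace Mstar"
        unfolding measM trM by (simp add: sum.distrib inner_sum_right sum_distrib_left)
      also have "\<dots> = - (R \<bullet> R) + (1 - \<delta>) * fn^2" unfolding RM \<kappa>_def using trpos by simp
      finally show False using RR by linarith
    qed
    then show ?thesis using that by blast
  qed
  obtain q where q: "norm q = 1" "(norm (X *v q))^2 = \<sigma>^2" using sigma_vec[of X] unfolding \<sigma>_def by blast
  define p where "p = X *v q"
  define U where "U = outer w q"
  define Z where "Z = outer p w + outer w p"
  have qq: "q \<bullet> q = 1" using q(1) by (metis power2_norm_eq_inner power_one)
  have nU: "(norm U)^2 = w \<bullet> w" unfolding U_def norm_outer q(1) by (simp add: power2_norm_eq_inner)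
  have LU: "Lm A X U = meas A Z" unfolding Lm_def U_def Z_def XUt UXt p_def ..
  have UU: "U ** transpose U = outer w w" unfolding U_def UUt qq by simp
  have BU: "Bf A Mstar X U U = meas A Z \<bullet> meas A Z + 2 * (R \<bullet> meas A (outer w w))"
    unfolding Bf_def LU UU R_def meas_add inner_add_right by simp
  have c1: "0 < CARD('r)" by (simp add: card_gt_0_iff)
  have rkZ: "rank Z \<le> CARD('r) + rs" using rank_sym_outer[of p w] dims(3) c1 unfolding Z_def by linarith
  have "meas A Z \<bullet> meas A Z \<le> (1 + \<delta>) * (norm Z)^2"
    using rip rkZ unfolding RIP_def by (simp add: frob_norm_eq power2_norm_eq_inner)
  also have "(norm Z)^2 \<le> 4 * \<sigma>^2 * (w \<bullet> w)"
  proof -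
    have "norm Z \<le> norm (outer p w) + norm (outer w p)" unfolding Z_def by (rule norm_triangle_ineq)
    also have "\<dots> = 2 * (norm p * norm w)" by (simp add: norm_outer)
    finally have "(norm Z)^2 \<le> (2 * (norm p * norm w))^2" by (intro power_mono) auto
    also have "\<dots> = 4 * (norm p)^2 * (norm w)^2" by (simp add: power_mult_distrib)
    finally show ?thesis using q(2) unfolding p_def by (simp add: power2_norm_eq_inner)
  qed
  finally have "meas A Z \<bullet> meas A Z \<le> (1 + \<delta>) * (4 * \<sigma>^2 * (w \<bullet> w))"
    using delta by (simp add: mult_left_mono)
  then have BUle: "Bf A Mstar X U U \<le> (4 * (1 + \<delta>) * \<sigma>^2 - 2 * \<kappa>) * (w \<bullet> w)"
    using BU w(2) by (simp add: algebra_simps)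
  obtain V \<mu> where V: "norm V = 1" "hess_op (ff A Mstar) X V = \<mu> *\<^sub>R V"
      and Vmin: "\<And>x. \<mu> * (norm x)^2 \<le> x \<bullet> hess_op (ff A Mstar) X x"
    using sym_min_eig[OF hess_op_linear hess_op_sym] by blast
  have "\<mu> * (w \<bullet> w) \<le> Bf A Mstar X U U" using Vmin[of U] nU by (simp add: hess_op_inner)
  then have "\<mu> * (w \<bullet> w) \<le> (4 * (1 + \<delta>) * \<sigma>^2 - 2 * \<kappa>) * (w \<bullet> w)" using BUle by linarith
  moreover have "w \<bullet> w > 0" using w(1) by simp
  ultimately have mu_le: "\<mu> \<le> 4 * (1 + \<delta>) * \<sigma>^2 - 2 * \<kappa>" by simp
  have mu_neg: "\<mu> < 0" using mu_le kappa_gt by linarith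
  have mu_bd: "\<mu> \<le> 2 * (1 + \<delta>) * \<sigma>^2 - \<kappa>" using mu_le kappa_gt by linarith
  have eig: "hess_eigenvalue f Xh \<mu>"
    unfolding hess_eigenvalue_def fff X_def[symmetric] using V by (intro exI[of _ V]) auto
  have "hess_form f Xh V = \<mu>"
    unfolding fff X_def[symmetric] hess_form_ff hess_op_inner[symmetric] V(2)
    using V(1) by (simp add: power2_norm_eq_inner[symmetric])
  then have nsoc: "\<not> second_order_critical f Xh"
    unfolding second_order_critical_def using mu_neg by (metis not_le)
  have ss: "strict_saddle f Xh" unfolding strict_saddle_def using crit eig mu_neg by blast
  have "\<mu> \<le> 2 * (1 + \<delta>) * (sigma_r Xh)\<^sup>2
                   - (1 - \<delta>) * (frob_norm (Xh ** transpose Xh - Mstar))\<^sup>2 / trace Mstar"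
    using mu_bd unfolding fnE \<kappa>_def \<sigma>_def X_def .
  then show ?thesis using nsoc ss eig mu_neg by blast
qed

end
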